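(* Let $I$ be an $\mathfrak m$-primary ideal of $R$ and let $r>0$ with $\mathfrak m^r\subset I$. Then for all integers $k,m\ge r$, $I^{(m)}/A^{(m)}=I^{(k)}/A^{(k)}$ as elements of the Grothendieck group $\mathbf G(X)$.
   Context: $\mathbf{k}$ is algebraically closed; $X\subset\mathbb{A}^N$ is an affine variety over $\mathbf k$ (possibly reducible) whose irreducible components $X_1,\ldots,X_r$ all have dimension $n$, containing the origin $o$; $R=\mathcal O_{X,o}$ with maximal ideal $\mathfrak m$. $A^{(m)}\subset R$: restrictions to $X$ of polynomials of degree $\le m$; $I^{(m)}=A^{(m)}\cap I$. $\mathbf K(X)$: finite-dimensional $\mathbf k$-subspaces of the algebra $\mathbf k(X)$ of rational functions with nonzero restriction to each $X_i$, identified when their restrictions to each $X_i$ coincide; a commutative semigroup under $LM=\operatorname{span}\{fg\}$. $\mathbf G(X)$: its Grothendieck group, i.e. formal quotients of $\mathbf K(X)/\!\sim$ where $L\sim M$ iff $LN=MN$ for some $N\in\mathbf K(X)$. *)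

theory Defs
  imports "HOL-Computational_Algebra.Polynomial" "HOL-Analysis.Finite_Cartesian_Product"
begin

text \<open>Ambient space: the affine space over the field 'k with coordinates indexed by
  the finite type 'n (so N = CARD('n)).  The origin o is the zero vector.\<close>

definition tdeg :: "('n::finite \<Rightarrow> nat) \<Rightarrow> nat" where
  "tdeg \<alpha> = (\<Sum>i\<in>UNIV. \<alpha> i)"

definition monom_fun :: "('n::finite \<Rightarrow> nat) \<Rightarrow> 'k::field ^ 'n \<Rightarrow> 'k" where
  "monom_fun \<alpha> x = (\<Prod>i\<in>UNIV. (x $ i) ^ (\<alpha> i))"

definition polyfun_deg :: "nat \<Rightarrow> ('k::field ^ 'n::finite \<Rightarrow> 'k) set" where
  "polyfun_deg m = {p. \<exists>c. p = (\<lambda>x. \<Sum>\<alpha>\<in>{\<alpha>::'n \<Rightarrow> nat. tdeg \<alpha> \<le> m}. c \<alpha> * monom_fun \<alpha> x)}"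

definition polyfun :: "('k::field ^ 'n::finite \<Rightarrow> 'k) set" where
  "polyfun = (\<Union>m. polyfun_deg m)"

definition zero_set :: "('k::field ^ 'n::finite \<Rightarrow> 'k) set \<Rightarrow> ('k ^ 'n) set" where
  "zero_set S = {x. \<forall>p\<in>S. p x = 0}"

definition zclosed :: "('k::field ^ 'n::finite) set \<Rightarrow> bool" where
  "zclosed Y \<longleftrightarrow> (\<exists>S. S \<subseteq> polyfun \<and> Y = zero_set S)"

definition affine_variety :: "('k::field ^ 'n::finite) set \<Rightarrow> bool" where
  "affine_variety X \<longleftrightarrow> zclosed X \<and> X \<noteq> {}"

definition zirreducible :: "('k::field ^ 'n::finite) set \<Rightarrow> bool" where
  "zirreducible Y \<longleftrightarrow> zclosed Y \<and> Y \<noteq> {} \<and>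
     (\<forall>Z1 Z2. zclosed Z1 \<and> zclosed Z2 \<and> Y \<subseteq> Z1 \<union> Z2 \<longrightarrow> Y \<subseteq> Z1 \<or> Y \<subseteq> Z2)"

definition irr_components :: "('k::field ^ 'n::finite) set \<Rightarrow> ('k ^ 'n) set set" where
  "irr_components X = {Y. Y \<subseteq> X \<and> zirreducible Y \<and>
      (\<forall>Z. zirreducible Z \<and> Y \<subseteq> Z \<and> Z \<subseteq> X \<longrightarrow> Z = Y)}"

definition irr_chain :: "(nat \<Rightarrow> ('k::field ^ 'n::finite) set) \<Rightarrow> nat \<Rightarrow> ('k ^ 'n) set \<Rightarrow> bool" where
  "irr_chain c d Y \<longleftrightarrow> (\<forall>i\<le>d. zirreducible (c i)) \<and> (\<forall>i<d. c i \<subset> c (Suc i)) \<and> c d \<subseteq> Y"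

definition has_dim :: "('k::field ^ 'n::finite) set \<Rightarrow> nat \<Rightarrow> bool" where
  "has_dim Y n \<longleftrightarrow> (\<exists>c. irr_chain c n Y) \<and> \<not> (\<exists>c. irr_chain c (Suc n) Y)"

text \<open>A rational function on X is a class of pairs (f,g) of polynomial functions with g
  not identically zero on any irreducible component (i.e. a non-zero-divisor of k[X]),
  where (f,g) ~ (f',g') iff f g' = f' g on X.\<close>

type_synonym ('k,'n) fpair = "('k ^ 'n \<Rightarrow> 'k) \<times> ('k ^ 'n \<Rightarrow> 'k)"
type_synonym ('k,'n) ratfun = "('k,'n) fpair set"

definition ratfun_pairs :: "('k::field ^ 'n::finite) set \<Rightarrow> ('k,'n) fpair set" where
  "ratfun_pairs X = {(f,g). f \<in> polyfun \<and> g \<in> polyfun \<and> (\<forall>Y\<in>irr_components X. \<exists>y\<in>Y. g y \<noteq> 0)}"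

definition ratcls :: "('k::field ^ 'n::finite) set \<Rightarrow> ('k,'n) fpair \<Rightarrow> ('k,'n) ratfun" where
  "ratcls X p = {q \<in> ratfun_pairs X. \<forall>x\<in>X. fst p x * snd q x = fst q x * snd p x}"

definition ratfuns :: "('k::field ^ 'n::finite) set \<Rightarrow> ('k,'n) ratfun set" where
  "ratfuns X = ratcls X ` ratfun_pairs X"

definition rep :: "('k::field,'n::finite) ratfun \<Rightarrow> ('k,'n) fpair" where
  "rep a = (SOME p. p \<in> a)"

definition rat_zero :: "('k::field ^ 'n::finite) set \<Rightarrow> ('k,'n) ratfun" where
  "rat_zero X = ratcls X (\<lambda>_. 0, \<lambda>_. 1)"

definition rat_one :: "('k::field ^ 'n::finite) set \<Rightarrow> ('k,'n) ratfun" where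
  "rat_one X = ratcls X (\<lambda>_. 1, \<lambda>_. 1)"

definition rat_add :: "('k::field ^ 'n::finite) set \<Rightarrow> ('k,'n) ratfun \<Rightarrow> ('k,'n) ratfun \<Rightarrow> ('k,'n) ratfun" where
  "rat_add X a b = ratcls X (\<lambda>x. fst (rep a) x * snd (rep b) x + fst (rep b) x * snd (rep a) x,
                             \<lambda>x. snd (rep a) x * snd (rep b) x)"

definition rat_mult :: "('k::field ^ 'n::finite) set \<Rightarrow> ('k,'n) ratfun \<Rightarrow> ('k,'n) ratfun \<Rightarrow> ('k,'n) ratfun" where
  "rat_mult X a b = ratcls X (\<lambda>x. fst (rep a) x * fst (rep b) x, \<lambda>x. snd (rep a) x * snd (rep b) x)"

definition rat_smult :: "('k::field ^ 'n::finite) set \<Rightarrow> 'k \<Rightarrow> ('k,'n) ratfun \<Rightarrow> ('k,'n) ratfun" where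
  "rat_smult X c a = ratcls X (\<lambda>x. c * fst (rep a) x, snd (rep a))"

fun rat_pow :: "('k::field ^ 'n::finite) set \<Rightarrow> ('k,'n) ratfun \<Rightarrow> nat \<Rightarrow> ('k,'n) ratfun" where
  "rat_pow X a 0 = rat_one X"
| "rat_pow X a (Suc k) = rat_mult X a (rat_pow X a k)"

inductive_set rspan :: "('k::field ^ 'n::finite) set \<Rightarrow> ('k,'n) ratfun set \<Rightarrow> ('k,'n) ratfun set"
  for X S where
  zero: "rat_zero X \<in> rspan X S"
| base: "s \<in> S \<Longrightarrow> s \<in> rspan X S"
| add: "a \<in> rspan X S \<Longrightarrow> b \<in> rspan X S \<Longrightarrow> rat_add X a b \<in> rspan X S"
| smult: "a \<in> rspan X S \<Longrightarrow> rat_smult X c a \<in> rspan X S"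

definition nonzero_on :: "('k::field ^ 'n::finite) set \<Rightarrow> ('k,'n) ratfun \<Rightarrow> bool" where
  "nonzero_on Y a \<longleftrightarrow> (\<exists>(f,g)\<in>a. \<exists>y\<in>Y. f y \<noteq> 0)"

definition KX :: "('k::field ^ 'n::finite) set \<Rightarrow> ('k,'n) ratfun set set" where
  "KX X = {L. L \<subseteq> ratfuns X \<and> rspan X L = L \<and>
              (\<exists>F. finite F \<and> F \<subseteq> L \<and> rspan X F = L) \<and>
              (\<forall>Y\<in>irr_components X. \<exists>a\<in>L. nonzero_on Y a)}"

definition sprod :: "('k::field ^ 'n::finite) set \<Rightarrow> ('k,'n) ratfun set \<Rightarrow> ('k,'n) ratfun set \<Rightarrow> ('k,'n) ratfun set" where
  "sprod X L M = rspan X {rat_mult X a b | a b. a \<in> L \<and> b \<in> M}"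

text \<open>Equality of the formal quotients L/M and L'/M' in G(X): by definition of the
  Grothendieck group of K(X) (quotient by L ~ M iff LN = MN for some N), this holds iff
  L M' ~ L' M, i.e. L M' N = L' M N for some N in K(X).\<close>
definition G_eq :: "('k::field ^ 'n::finite) set \<Rightarrow> ('k,'n) ratfun set \<Rightarrow> ('k,'n) ratfun set \<Rightarrow>
                     ('k,'n) ratfun set \<Rightarrow> ('k,'n) ratfun set \<Rightarrow> bool" where
  "G_eq X L M L' M' \<longleftrightarrow> (\<exists>N\<in>KX X. sprod X (sprod X L M') N = sprod X (sprod X L' M) N)"

definition loc_ring :: "('k::field ^ 'n::finite) set \<Rightarrow> ('k,'n) ratfun set" where
  "loc_ring X = {a \<in> ratfuns X. \<exists>(f,g)\<in>a. g 0 \<noteq> 0}"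

definition max_ideal :: "('k::field ^ 'n::finite) set \<Rightarrow> ('k,'n) ratfun set" where
  "max_ideal X = {a \<in> ratfuns X. \<exists>(f,g)\<in>a. g 0 \<noteq> 0 \<and> f 0 = 0}"

definition is_ideal :: "('k::field ^ 'n::finite) set \<Rightarrow> ('k,'n) ratfun set \<Rightarrow> bool" where
  "is_ideal X I \<longleftrightarrow> I \<subseteq> loc_ring X \<and> rat_zero X \<in> I \<and>
     (\<forall>a\<in>I. \<forall>b\<in>I. rat_add X a b \<in> I) \<and>
     (\<forall>r\<in>loc_ring X. \<forall>a\<in>I. rat_mult X r a \<in> I)"

definition is_primary_for :: "('k::field ^ 'n::finite) set \<Rightarrow> ('k,'n) ratfun set \<Rightarrow> ('k,'n) ratfun set \<Rightarrow> bool" where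
  "is_primary_for X P I \<longleftrightarrow> is_ideal X I \<and> I \<noteq> loc_ring X \<and>
     (\<forall>a\<in>loc_ring X. \<forall>b\<in>loc_ring X. rat_mult X a b \<in> I \<and> a \<notin> I \<longrightarrow> (\<exists>k. rat_pow X b k \<in> I)) \<and>
     {a \<in> loc_ring X. \<exists>k. rat_pow X a k \<in> I} = P"

fun mprods :: "('k::field ^ 'n::finite) set \<Rightarrow> nat \<Rightarrow> ('k,'n) ratfun set" where
  "mprods X 0 = {rat_one X}"
| "mprods X (Suc r) = {rat_mult X a p | a p. a \<in> max_ideal X \<and> p \<in> mprods X r}"

inductive_set ideal_gen :: "('k::field ^ 'n::finite) set \<Rightarrow> ('k,'n) ratfun set \<Rightarrow> ('k,'n) ratfun set"
  for X S where
  zero: "rat_zero X \<in> ideal_gen X S"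
| base: "s \<in> S \<Longrightarrow> s \<in> ideal_gen X S"
| add: "a \<in> ideal_gen X S \<Longrightarrow> b \<in> ideal_gen X S \<Longrightarrow> rat_add X a b \<in> ideal_gen X S"
| mult: "r \<in> loc_ring X \<Longrightarrow> a \<in> ideal_gen X S \<Longrightarrow> rat_mult X r a \<in> ideal_gen X S"

definition max_ideal_pow :: "('k::field ^ 'n::finite) set \<Rightarrow> nat \<Rightarrow> ('k,'n) ratfun set" where
  "max_ideal_pow X r = ideal_gen X (mprods X r)"

definition A_deg :: "('k::field ^ 'n::finite) set \<Rightarrow> nat \<Rightarrow> ('k,'n) ratfun set" where
  "A_deg X m = {ratcls X (p, \<lambda>_. 1) | p. p \<in> polyfun_deg m}"

definition I_deg :: "('k::field ^ 'n::finite) set \<Rightarrow> ('k,'n) ratfun set \<Rightarrow> nat \<Rightarrow> ('k,'n) ratfun set" where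
  "I_deg X I m = A_deg X m \<inter> I"

end

theory Submission
  imports Defs
begin

lemma finite_tdeg: "finite {\<alpha>::'n::finite \<Rightarrow> nat. tdeg \<alpha> \<le> m}"
proof -
  have "{\<alpha>::'n \<Rightarrow> nat. tdeg \<alpha> \<le> m} \<subseteq> Pi\<^sub>E UNIV (\<lambda>_. {..m})"
  proof
    fix \<alpha> :: "'n \<Rightarrow> nat" assume "\<alpha> \<in> {\<alpha>. tdeg \<alpha> \<le> m}"
    hence "tdeg \<alpha> \<le> m" by simp
    moreover have "\<alpha> i \<le> tdeg \<alpha>" for i unfolding tdeg_def
      by (rule member_le_sum) auto
    ultimately show "\<alpha> \<in> Pi\<^sub>E UNIV (\<lambda>_. {..m})" by (auto intro: order_trans)
  qed
  thus ?thesis by (rule finite_subset) (simp add: finite_PiE)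
qed

lemma polyfun_deg_gen:
  fixes e :: "'s \<Rightarrow> ('n::finite \<Rightarrow> nat)" and c :: "'s \<Rightarrow> 'k::field"
  assumes "finite S" "\<forall>s\<in>S. tdeg (e s) \<le> m"
  shows "(\<lambda>x::'k^'n. \<Sum>s\<in>S. c s * monom_fun (e s) x) \<in> polyfun_deg m"
proof -
  let ?T = "{\<alpha>::'n \<Rightarrow> nat. tdeg \<alpha> \<le> m}"
  define C where "C \<alpha> = (\<Sum>s\<in>{s\<in>S. e s = \<alpha>}. c s)" for \<alpha>
  have "(\<lambda>x::'k^'n. \<Sum>s\<in>S. c s * monom_fun (e s) x) = (\<lambda>x. \<Sum>\<alpha>\<in>?T. C \<alpha> * monom_fun \<alpha> x)"
  proof
    fix x :: "'k^'n"
    have "(\<Sum>\<alpha>\<in>?T. C \<alpha> * monom_fun \<alpha> x) = (\<Sum>\<alpha>\<in>?T. \<Sum>s\<in>{s\<in>S. e s = \<alpha>}. c s * monom_fun (e s) x)"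
      unfolding C_def by (auto simp: sum_distrib_right intro!: sum.cong)
    also have "\<dots> = (\<Sum>s\<in>S. c s * monom_fun (e s) x)"
      by (rule sum.group) (use assms finite_tdeg in auto)
    finally show "(\<Sum>s\<in>S. c s * monom_fun (e s) x) = (\<Sum>\<alpha>\<in>?T. C \<alpha> * monom_fun \<alpha> x)" by simp
  qed
  thus ?thesis unfolding polyfun_deg_def by blast
qed

lemma polyfun_deg_obtain:
  assumes "p \<in> polyfun_deg m"
  obtains c where "p = (\<lambda>x. \<Sum>\<alpha>\<in>{\<alpha>. tdeg \<alpha> \<le> m}. c \<alpha> * monom_fun \<alpha> x)"
  using assms unfolding polyfun_deg_def by blast

lemma polyfun_deg_mono: "m \<le> m' \<Longrightarrow> p \<in> polyfun_deg m \<Longrightarrow> p \<in> polyfun_deg m'"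
proof -
  assume "m \<le> m'" "p \<in> polyfun_deg m"
  then obtain c where pc: "p = (\<lambda>x. \<Sum>\<alpha>\<in>{\<alpha>. tdeg \<alpha> \<le> m}. c \<alpha> * monom_fun \<alpha> x)"
    using polyfun_deg_obtain by blast
  have "(\<lambda>x::'a^'b. \<Sum>\<alpha>\<in>{\<alpha>. tdeg \<alpha> \<le> m}. c \<alpha> * monom_fun \<alpha> x) \<in> polyfun_deg m'"
    apply (rule polyfun_deg_gen[of "{\<alpha>. tdeg \<alpha> \<le> m}" "\<lambda>\<alpha>. \<alpha>" m' c, simplified])
    using \<open>m \<le> m'\<close> finite_tdeg by auto
  thus ?thesis using pc by simp
qed

lemma tdeg_add: "tdeg (\<lambda>i. \<alpha> i + \<beta> i) = tdeg \<alpha> + tdeg \<beta>"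
  unfolding tdeg_def by (simp add: sum.distrib)

lemma monom_fun_add: "monom_fun (\<lambda>i. \<alpha> i + \<beta> i) x = monom_fun \<alpha> x * monom_fun \<beta> x"
  unfolding monom_fun_def by (simp add: power_add prod.distrib)

lemma monom_fun_zero: "monom_fun (\<lambda>_. 0) x = 1"
  unfolding monom_fun_def by simp

lemma tdeg_zero: "tdeg (\<lambda>_. 0) = 0" unfolding tdeg_def by simp

definition delta :: "'n \<Rightarrow> 'n \<Rightarrow> nat" where "delta i = (\<lambda>j. if j = i then 1 else 0)"

lemma tdeg_delta: "tdeg (delta (i::'n::finite)) = 1"
  unfolding tdeg_def delta_def by simp

lemma monom_fun_delta: "monom_fun (delta i) (x::'k::field^'n::finite) = x $ i"
proof -
  have "monom_fun (delta i) x = (\<Prod>j\<in>UNIV. if j = i then x $ j else 1)"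
    unfolding monom_fun_def delta_def by (intro prod.cong) auto
  also have "\<dots> = x $ i" by (simp add: prod.delta)
  finally show ?thesis .
qed

lemma polyfun_deg_monom: "tdeg \<alpha> \<le> m \<Longrightarrow> monom_fun \<alpha> \<in> polyfun_deg m"
  using polyfun_deg_gen[of "{()}" "\<lambda>_. \<alpha>" m "\<lambda>_. 1"] by simp

lemma polyfun_deg_const: "(\<lambda>_. c) \<in> polyfun_deg m"
  using polyfun_deg_gen[of "{()}" "\<lambda>_. (\<lambda>_. 0)" m "\<lambda>_. c"] by (simp add: monom_fun_zero tdeg_zero)

lemma polyfun_deg_coord: "(\<lambda>x::'k::field^'n::finite. x $ i) \<in> polyfun_deg 1"
proof -
  have "monom_fun (delta i) \<in> (polyfun_deg 1 :: ('k^'n \<Rightarrow> 'k) set)"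
    by (rule polyfun_deg_monom) (simp add: tdeg_delta)
  moreover have "monom_fun (delta i) = (\<lambda>x::'k^'n. x $ i)" by (rule ext) (simp add: monom_fun_delta)
  ultimately show ?thesis by metis
qed

lemma polyfun_degI: "p = (\<lambda>x. \<Sum>\<alpha>\<in>{\<alpha>. tdeg \<alpha> \<le> m}. c \<alpha> * monom_fun \<alpha> x) \<Longrightarrow> p \<in> polyfun_deg m"
  unfolding polyfun_deg_def by blast

lemma polyfun_deg_add: "p \<in> polyfun_deg m \<Longrightarrow> q \<in> polyfun_deg m \<Longrightarrow> (\<lambda>x. p x + q x) \<in> polyfun_deg m"
proof -
  assume "p \<in> polyfun_deg m" "q \<in> polyfun_deg m"
  obtain c where pc: "p = (\<lambda>x. \<Sum>\<alpha>\<in>{\<alpha>. tdeg \<alpha> \<le> m}. c \<alpha> * monom_fun \<alpha> x)"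
    using polyfun_deg_obtain[OF \<open>p \<in> _\<close>] by blast
  obtain d where qd: "q = (\<lambda>x. \<Sum>\<alpha>\<in>{\<alpha>. tdeg \<alpha> \<le> m}. d \<alpha> * monom_fun \<alpha> x)"
    using polyfun_deg_obtain[OF \<open>q \<in> _\<close>] by blast
  show ?thesis
  proof (rule polyfun_degI[where c="\<lambda>\<alpha>. c \<alpha> + d \<alpha>"], rule ext)
    fix x show "p x + q x = (\<Sum>\<alpha>\<in>{\<alpha>. tdeg \<alpha> \<le> m}. (c \<alpha> + d \<alpha>) * monom_fun \<alpha> x)"
      unfolding pc qd sum.distrib[symmetric] by (rule sum.cong) (auto simp: distrib_right)
  qed
qed

lemma polyfun_deg_smult: "p \<in> polyfun_deg m \<Longrightarrow> (\<lambda>x. a * p x) \<in> polyfun_deg m"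
proof -
  assume "p \<in> polyfun_deg m"
  obtain c where pc: "p = (\<lambda>x. \<Sum>\<alpha>\<in>{\<alpha>. tdeg \<alpha> \<le> m}. c \<alpha> * monom_fun \<alpha> x)"
    using polyfun_deg_obtain[OF \<open>p \<in> _\<close>] by blast
  show ?thesis
  proof (rule polyfun_degI[where c="\<lambda>\<alpha>. a * c \<alpha>"], rule ext)
    fix x show "a * p x = (\<Sum>\<alpha>\<in>{\<alpha>. tdeg \<alpha> \<le> m}. (a * c \<alpha>) * monom_fun \<alpha> x)"
      unfolding pc sum_distrib_left by (rule sum.cong) (auto simp: mult.assoc)
  qed
qed

lemma polyfun_deg_mult:
  fixes p q :: "'k::field^'n::finite \<Rightarrow> 'k"
  shows "p \<in> polyfun_deg m \<Longrightarrow> q \<in> polyfun_deg m' \<Longrightarrow> (\<lambda>x. p x * q x) \<in> polyfun_deg (m + m')"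
proof -
  assume "p \<in> polyfun_deg m" "q \<in> polyfun_deg m'"
  obtain c where p: "p = (\<lambda>x. \<Sum>\<alpha>\<in>{\<alpha>. tdeg \<alpha> \<le> m}. c \<alpha> * monom_fun \<alpha> x)"
    using polyfun_deg_obtain[OF \<open>p \<in> _\<close>] by blast
  obtain d where q: "q = (\<lambda>x. \<Sum>\<alpha>\<in>{\<alpha>. tdeg \<alpha> \<le> m'}. d \<alpha> * monom_fun \<alpha> x)"
    using polyfun_deg_obtain[OF \<open>q \<in> _\<close>] by blast
  define S where "S = {\<alpha>::'n\<Rightarrow>nat. tdeg \<alpha> \<le> m} \<times> {\<alpha>::'n\<Rightarrow>nat. tdeg \<alpha> \<le> m'}"
  define e where "e = (\<lambda>s::('n\<Rightarrow>nat)\<times>('n\<Rightarrow>nat). (\<lambda>i. fst s i + snd s i))"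
  define C where "C = (\<lambda>s::('n\<Rightarrow>nat)\<times>('n\<Rightarrow>nat). c (fst s) * d (snd s))"
  have eq: "(\<lambda>x. p x * q x) = (\<lambda>x. \<Sum>s\<in>S. C s * monom_fun (e s) x)"
  proof
    fix x
    show "p x * q x = (\<Sum>s\<in>S. C s * monom_fun (e s) x)"
      unfolding p q sum_product sum.cartesian_product S_def
      by (rule sum.cong) (auto simp: mult_ac C_def e_def monom_fun_add)
  qed
  have fin: "finite S" unfolding S_def using finite_tdeg by blast
  have deg: "\<forall>s\<in>S. tdeg (e s) \<le> m + m'" unfolding S_def e_def by (auto simp: tdeg_add)
  show ?thesis unfolding eq by (rule polyfun_deg_gen[OF fin deg])
qed

lemma polyfun_add: "p \<in> polyfun \<Longrightarrow> q \<in> polyfun \<Longrightarrow> (\<lambda>x. p x + q x) \<in> polyfun"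
proof -
  assume "p \<in> polyfun" "q \<in> polyfun"
  then obtain a b where "p \<in> polyfun_deg a" "q \<in> polyfun_deg b" unfolding polyfun_def by blast
  hence "p \<in> polyfun_deg (max a b)" "q \<in> polyfun_deg (max a b)"
    by (auto intro: polyfun_deg_mono[rotated])
  thus ?thesis unfolding polyfun_def by (blast intro: polyfun_deg_add)
qed

lemma polyfun_mult: "p \<in> polyfun \<Longrightarrow> q \<in> polyfun \<Longrightarrow> (\<lambda>x. p x * q x) \<in> polyfun"
  unfolding polyfun_def by (auto intro: polyfun_deg_mult)

lemma polyfun_const: "(\<lambda>_. c) \<in> polyfun"
  unfolding polyfun_def using polyfun_deg_const by blast

lemma polyfun_coord: "(\<lambda>x::'k::field^'n::finite. x $ i) \<in> polyfun"
  unfolding polyfun_def using polyfun_deg_coord by blast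

lemma polyfun_smult: "p \<in> polyfun \<Longrightarrow> (\<lambda>x. a * p x) \<in> polyfun"
  using polyfun_mult[OF polyfun_const] by blast

lemma polyfun_diff: "p \<in> polyfun \<Longrightarrow> q \<in> polyfun \<Longrightarrow> (\<lambda>x. p x - q x) \<in> polyfun"
  using polyfun_add[of p "\<lambda>x. (-1) * q x"] polyfun_smult[of q "-1"] by simp

lemma polyfun_deg_polyfun: "p \<in> polyfun_deg m \<Longrightarrow> p \<in> polyfun"
  unfolding polyfun_def by blast

lemma zclosed_zero_poly: "g \<in> polyfun \<Longrightarrow> zclosed {x. g x = 0}"
  unfolding zclosed_def zero_set_def by (rule exI[of _ "{g}"]) auto

lemma comp_irr: "Y \<in> irr_components X \<Longrightarrow> zirreducible Y"
  unfolding irr_components_def by blast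

lemma comp_sub: "Y \<in> irr_components X \<Longrightarrow> Y \<subseteq> X"
  unfolding irr_components_def by blast

lemma comp_ne: "Y \<in> irr_components X \<Longrightarrow> Y \<noteq> {}"
  unfolding irr_components_def zirreducible_def by blast

lemma irr_prod_nonzero:
  assumes Y: "zirreducible Y" and g: "g \<in> polyfun" and h: "h \<in> polyfun"
    and gy: "\<exists>y\<in>Y. g y \<noteq> 0" and hy: "\<exists>y\<in>Y. h y \<noteq> 0"
  shows "\<exists>y\<in>Y. g y * h y \<noteq> 0"
proof (rule ccontr)
  assume "\<not> ?thesis"
  hence "Y \<subseteq> {x. g x = 0} \<union> {x. h x = 0}" by auto
  with Y zclosed_zero_poly[OF g] zclosed_zero_poly[OF h]
  have "Y \<subseteq> {x. g x = 0} \<or> Y \<subseteq> {x. h x = 0}" unfolding zirreducible_def by blast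
  with gy hy show False by auto
qed

lemma irr_cancel:
  assumes Y: "zirreducible Y" and g: "g \<in> polyfun" and D: "D \<in> polyfun"
    and gy: "\<exists>y\<in>Y. g y \<noteq> 0" and z: "\<forall>y\<in>Y. g y * D y = 0"
  shows "\<forall>y\<in>Y. D y = 0"
proof -
  from z have "Y \<subseteq> {x. g x = 0} \<union> {x. D x = 0}" by auto
  with Y zclosed_zero_poly[OF g] zclosed_zero_poly[OF D]
  have "Y \<subseteq> {x. g x = 0} \<or> Y \<subseteq> {x. D x = 0}" unfolding zirreducible_def by blast
  with gy show ?thesis by auto
qed

definition zcl :: "('k::field ^ 'n::finite) set \<Rightarrow> ('k ^ 'n) set" where
  "zcl U = zero_set {p \<in> polyfun. \<forall>u\<in>U. p u = 0}"

lemma zcl_closed: "zclosed (zcl U)"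
  unfolding zcl_def zclosed_def
  by (rule exI[of _ "{p \<in> polyfun. \<forall>u\<in>U. p u = 0}"]) simp

lemma zcl_sup: "U \<subseteq> zcl U"
  unfolding zcl_def zero_set_def by auto

lemma zcl_least:
  assumes "zclosed Z" "U \<subseteq> Z" shows "zcl U \<subseteq> Z"
proof
  fix z assume z: "z \<in> zcl U"
  obtain S where S: "S \<subseteq> polyfun" "Z = zero_set S" using assms(1) unfolding zclosed_def by blast
  have "p z = 0" if "p \<in> S" for p
  proof -
    have "\<forall>u\<in>U. p u = 0" using assms(2) S that unfolding zero_set_def by blast
    hence "p \<in> {p \<in> polyfun. \<forall>u\<in>U. p u = 0}" using S that by blast
    thus ?thesis using z unfolding zcl_def zero_set_def by blast
  qed
  thus "z \<in> Z" using S unfolding zero_set_def by blast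
qed

lemma singleton_zclosed: "zclosed {x::'k::field^'n::finite}"
proof -
  let ?S = "{(\<lambda>y::'k^'n. y $ i - x $ i) | i. True}"
  have "?S \<subseteq> polyfun"
  proof
    fix p assume "p \<in> ?S"
    then obtain i where "p = (\<lambda>y::'k^'n. y $ i - x $ i)" by blast
    thus "p \<in> polyfun" using polyfun_diff[OF polyfun_coord[of i] polyfun_const[of "x $ i"]] by simp
  qed
  moreover have "{x} = zero_set ?S"
  proof
    show "{x} \<subseteq> zero_set ?S" unfolding zero_set_def by auto
    show "zero_set ?S \<subseteq> {x}"
    proof
      fix y assume "y \<in> zero_set ?S"
      hence all: "\<forall>p\<in>?S. p y = 0" by (simp add: zero_set_def)
      have "y $ i - x $ i = 0" for i
      proof -
        have "(\<lambda>y::'k^'n. y $ i - x $ i) \<in> ?S" by blast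
        from bspec[OF all this] show ?thesis by simp
      qed
      hence "y = x" by (simp add: vec_eq_iff)
      thus "y \<in> {x}" by simp
    qed
  qed
  ultimately show ?thesis unfolding zclosed_def by blast
qed

lemma singleton_irr: "zirreducible {x::'k::field^'n::finite}"
  unfolding zirreducible_def using singleton_zclosed by auto

lemma irr_split: "zirreducible Y \<Longrightarrow> zclosed Z1 \<Longrightarrow> zclosed Z2 \<Longrightarrow> Y \<subseteq> Z1 \<union> Z2 \<Longrightarrow> Y \<subseteq> Z1 \<or> Y \<subseteq> Z2"
  unfolding zirreducible_def by blast

lemma zirreducibleI: "zclosed Y \<Longrightarrow> Y \<noteq> {} \<Longrightarrow>
  (\<And>Z1 Z2. zclosed Z1 \<Longrightarrow> zclosed Z2 \<Longrightarrow> Y \<subseteq> Z1 \<union> Z2 \<Longrightarrow> Y \<subseteq> Z1 \<or> Y \<subseteq> Z2) \<Longrightarrow> zirreducible Y"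
  unfolding zirreducible_def by blast

lemma chain_zcl_irr:
  assumes C: "C \<noteq> {}" "\<And>Z. Z\<in>C \<Longrightarrow> zirreducible Z" "\<And>A B. A\<in>C \<Longrightarrow> B\<in>C \<Longrightarrow> A \<subseteq> B \<or> B \<subseteq> A"
  shows "zirreducible (zcl (\<Union>C))"
proof (rule zirreducibleI[OF zcl_closed])
  obtain Z where "Z \<in> C" using C(1) by blast
  moreover have "Z \<noteq> {}" using C(2)[OF \<open>Z \<in> C\<close>] unfolding zirreducible_def by simp
  ultimately show "zcl (\<Union>C) \<noteq> {}" using zcl_sup[of "\<Union>C"] by blast
next
  fix Z1 Z2 assume Z: "zclosed Z1" "zclosed Z2" "zcl (\<Union>C) \<subseteq> Z1 \<union> Z2"
  show "zcl (\<Union>C) \<subseteq> Z1 \<or> zcl (\<Union>C) \<subseteq> Z2"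
  proof (cases "\<Union>C \<subseteq> Z1")
    case True thus ?thesis using zcl_least[OF Z(1)] by blast
  next
    case False
    then obtain Z0 where Z0: "Z0 \<in> C" "\<not> Z0 \<subseteq> Z1" by blast
    have each: "W \<subseteq> Z1 \<or> W \<subseteq> Z2" if "W \<in> C" for W
    proof -
      have "W \<subseteq> \<Union>C" using that by blast
      hence "W \<subseteq> Z1 \<union> Z2" using Z(3) zcl_sup[of "\<Union>C"] by blast
      thus ?thesis by (rule irr_split[OF C(2)[OF that] Z(1,2)])
    qed
    have Z02: "Z0 \<subseteq> Z2" using each[OF Z0(1)] Z0(2) by blast
    have "W \<subseteq> Z2" if "W \<in> C" for W
    proof (cases "W \<subseteq> Z0")
      case True thus ?thesis using Z02 by blast
    next
      case False
      hence "Z0 \<subseteq> W" using C(3)[OF that Z0(1)] by blast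
      hence "\<not> W \<subseteq> Z1" using Z0(2) by blast
      thus ?thesis using each[OF that] by blast
    qed
    hence "\<Union>C \<subseteq> Z2" by blast
    thus ?thesis using zcl_least[OF Z(2)] by blast
  qed
qed

lemma in_component:
  fixes X :: "('k::field ^ 'n::finite) set"
  assumes X: "zclosed X" and x: "x \<in> X"
  shows "\<exists>Y\<in>irr_components X. x \<in> Y"
proof -
  define A where "A = {Z. zirreducible Z \<and> x \<in> Z \<and> Z \<subseteq> X}"
  have "\<forall>C\<in>chains A. \<exists>U\<in>A. \<forall>W\<in>C. W \<subseteq> U"
  proof
    fix C assume "C \<in> chains A"
    hence CA: "C \<subseteq> A" and ch: "\<And>A B. A\<in>C \<Longrightarrow> B\<in>C \<Longrightarrow> A \<subseteq> B \<or> B \<subseteq> A"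
      unfolding chains_def chain_subset_def by auto
    show "\<exists>U\<in>A. \<forall>W\<in>C. W \<subseteq> U"
    proof (cases "C = {}")
      case True
      have "{x} \<in> A" unfolding A_def using singleton_irr x by auto
      thus ?thesis using True by blast
    next
      case False
      have irrC: "zirreducible Z" if "Z \<in> C" for Z using CA that unfolding A_def by blast
      have irr: "zirreducible (zcl (\<Union>C))"
        by (rule chain_zcl_irr[OF False irrC ch])
      have subX: "\<Union>C \<subseteq> X" using CA unfolding A_def by blast
      have "zcl (\<Union>C) \<subseteq> X" by (rule zcl_least[OF X subX])
      moreover obtain Z where "Z \<in> C" using False by blast
      hence "x \<in> \<Union>C" using CA unfolding A_def by blast
      hence "x \<in> zcl (\<Union>C)" using zcl_sup[of "\<Union>C"] by blast
      ultimately have "zcl (\<Union>C) \<in> A" using irr unfolding A_def by blast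
      moreover have "\<forall>W\<in>C. W \<subseteq> zcl (\<Union>C)" using zcl_sup[of "\<Union>C"] by blast
      ultimately show ?thesis by blast
    qed
  qed
  from Zorn_Lemma2[OF this] obtain M where M: "M \<in> A" "\<forall>Z\<in>A. M \<subseteq> Z \<longrightarrow> Z = M" by blast
  have MA: "zirreducible M" "x \<in> M" "M \<subseteq> X" using M(1) unfolding A_def by auto
  have "M \<in> irr_components X"
    unfolding irr_components_def
  proof (intro CollectI conjI allI impI)
    fix Z assume "zirreducible Z \<and> M \<subseteq> Z \<and> Z \<subseteq> X"
    hence "Z \<in> A" using MA unfolding A_def by blast
    thus "Z = M" using M(2) \<open>zirreducible Z \<and> M \<subseteq> Z \<and> Z \<subseteq> X\<close> by blast
  qed (use MA in auto)
  thus ?thesis using MA by blast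
qed

lemma X_cancel:
  assumes X: "zclosed X" and g: "g \<in> polyfun" and D: "D \<in> polyfun"
    and gY: "\<forall>Y\<in>irr_components X. \<exists>y\<in>Y. g y \<noteq> 0"
    and z: "\<forall>x\<in>X. g x * D x = 0"
  shows "\<forall>x\<in>X. D x = 0"
proof
  fix x assume "x \<in> X"
  then obtain Y where Y: "Y \<in> irr_components X" "x \<in> Y" using in_component[OF X] by blast
  have "\<forall>y\<in>Y. D y = 0"
    by (rule irr_cancel[OF comp_irr[OF Y(1)] g D]) (use gY Y z comp_sub[OF Y(1)] in auto)
  thus "D x = 0" using Y by blast
qed

definition rel :: "('k::field ^ 'n::finite) set \<Rightarrow> ('k,'n) fpair \<Rightarrow> ('k,'n) fpair \<Rightarrow> bool" where
  "rel X p q \<longleftrightarrow> (\<forall>x\<in>X. fst p x * snd q x = fst q x * snd p x)"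

definition pc :: "('k::field ^ 'n::finite) set \<Rightarrow> ('k ^ 'n \<Rightarrow> 'k) \<Rightarrow> ('k,'n) ratfun" where
  "pc X f = ratcls X (f, \<lambda>_. 1)"

lemma pairs_iff: "(f,g) \<in> ratfun_pairs X \<longleftrightarrow> f \<in> polyfun \<and> g \<in> polyfun \<and> (\<forall>Y\<in>irr_components X. \<exists>y\<in>Y. g y \<noteq> 0)"
  unfolding ratfun_pairs_def by simp

lemma pairs_polyfun: "p \<in> ratfun_pairs X \<Longrightarrow> fst p \<in> polyfun \<and> snd p \<in> polyfun \<and> (\<forall>Y\<in>irr_components X. \<exists>y\<in>Y. snd p y \<noteq> 0)"
  unfolding ratfun_pairs_def by auto

lemma one_pair: "f \<in> polyfun \<Longrightarrow> (f, \<lambda>_. 1) \<in> ratfun_pairs X"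
  unfolding pairs_iff using polyfun_const comp_ne by fastforce

lemma pairs_mult:
  assumes "p \<in> ratfun_pairs X" "q \<in> ratfun_pairs X"
  shows "(\<lambda>x. fst p x * fst q x, \<lambda>x. snd p x * snd q x) \<in> ratfun_pairs X"
proof -
  have pp: "fst p \<in> polyfun" "snd p \<in> polyfun" "\<forall>Y\<in>irr_components X. \<exists>y\<in>Y. snd p y \<noteq> 0"
    using pairs_polyfun[OF assms(1)] by auto
  have qq: "fst q \<in> polyfun" "snd q \<in> polyfun" "\<forall>Y\<in>irr_components X. \<exists>y\<in>Y. snd q y \<noteq> 0"
    using pairs_polyfun[OF assms(2)] by auto
  have "\<exists>y\<in>Y. snd p y * snd q y \<noteq> 0" if Y: "Y \<in> irr_components X" for Y
    by (rule irr_prod_nonzero[OF comp_irr[OF Y] pp(2) qq(2)]) (use pp(3) qq(3) Y in auto)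
  thus ?thesis unfolding pairs_iff using polyfun_mult[OF pp(1) qq(1)] polyfun_mult[OF pp(2) qq(2)] by blast
qed

lemma pairs_add:
  assumes "p \<in> ratfun_pairs X" "q \<in> ratfun_pairs X"
  shows "(\<lambda>x. fst p x * snd q x + fst q x * snd p x, \<lambda>x. snd p x * snd q x) \<in> ratfun_pairs X"
proof -
  have pp: "fst p \<in> polyfun" "snd p \<in> polyfun" "\<forall>Y\<in>irr_components X. \<exists>y\<in>Y. snd p y \<noteq> 0"
    using pairs_polyfun[OF assms(1)] by auto
  have qq: "fst q \<in> polyfun" "snd q \<in> polyfun" "\<forall>Y\<in>irr_components X. \<exists>y\<in>Y. snd q y \<noteq> 0"
    using pairs_polyfun[OF assms(2)] by auto
  have "\<exists>y\<in>Y. snd p y * snd q y \<noteq> 0" if Y: "Y \<in> irr_components X" for Y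
    by (rule irr_prod_nonzero[OF comp_irr[OF Y] pp(2) qq(2)]) (use pp(3) qq(3) Y in auto)
  moreover have "(\<lambda>x. fst p x * snd q x + fst q x * snd p x) \<in> polyfun"
    by (rule polyfun_add[OF polyfun_mult[OF pp(1) qq(2)] polyfun_mult[OF qq(1) pp(2)]])
  ultimately show ?thesis unfolding pairs_iff using polyfun_mult[OF pp(2) qq(2)] by blast
qed

lemma pairs_smult:
  assumes "p \<in> ratfun_pairs X"
  shows "(\<lambda>x. c * fst p x, snd p) \<in> ratfun_pairs X"
  using assms polyfun_smult unfolding ratfun_pairs_def by auto

lemma rel_sym: "rel X p q \<Longrightarrow> rel X q p"
  unfolding rel_def by (simp add: mult.commute)

lemma rel_trans:
  assumes X: "zclosed X" and P: "p \<in> ratfun_pairs X" "q \<in> ratfun_pairs X" "s \<in> ratfun_pairs X"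
    and pq: "rel X p q" and qs: "rel X q s"
  shows "rel X p s"
proof -
  let ?D = "\<lambda>x. fst p x * snd s x - fst s x * snd p x"
  have g: "snd q \<in> polyfun" "\<forall>Y\<in>irr_components X. \<exists>y\<in>Y. snd q y \<noteq> 0"
    using pairs_polyfun[OF P(2)] by auto
  have pp: "fst p \<in> polyfun" "snd p \<in> polyfun" using pairs_polyfun[OF P(1)] by auto
  have ss: "fst s \<in> polyfun" "snd s \<in> polyfun" using pairs_polyfun[OF P(3)] by auto
  have D: "?D \<in> polyfun" by (rule polyfun_diff[OF polyfun_mult[OF pp(1) ss(2)] polyfun_mult[OF ss(1) pp(2)]])
  have "\<forall>x\<in>X. snd q x * ?D x = 0"
  proof
    fix x assume "x \<in> X"
    hence e1: "fst p x * snd q x = fst q x * snd p x" and e2: "fst q x * snd s x = fst s x * snd q x"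
      using pq qs unfolding rel_def by auto
    have "snd q x * ?D x = (fst p x * snd q x) * snd s x - fst s x * snd q x * snd p x"
      by (simp add: algebra_simps)
    also have "\<dots> = (fst q x * snd s x) * snd p x - fst s x * snd q x * snd p x"
      by (simp add: e1 algebra_simps)
    also have "\<dots> = 0" by (simp add: e2)
    finally show "snd q x * ?D x = 0" .
  qed
  from X_cancel[OF X g(1) D g(2) this] show ?thesis unfolding rel_def by simp
qed

lemma ratcls_eq:
  assumes X: "zclosed X" and P: "p \<in> ratfun_pairs X" "p' \<in> ratfun_pairs X" and r: "rel X p p'"
  shows "ratcls X p = ratcls X p'"
proof -
  have "rel X p q \<longleftrightarrow> rel X p' q" if "q \<in> ratfun_pairs X" for q
    using rel_trans[OF X P(2) P(1) that rel_sym[OF r]] rel_trans[OF X P(1) P(2) that r] by blast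
  thus ?thesis unfolding ratcls_def rel_def[symmetric] by auto
qed

lemma ratcls_self: "p \<in> ratfun_pairs X \<Longrightarrow> p \<in> ratcls X p"
  unfolding ratcls_def by auto

lemma ratcls_mem: "q \<in> ratcls X p \<Longrightarrow> q \<in> ratfun_pairs X \<and> rel X p q"
  unfolding ratcls_def rel_def by auto

lemma rep_mem: "a \<in> ratfuns X \<Longrightarrow> rep a \<in> a"
  unfolding ratfuns_def rep_def by (auto intro: someI ratcls_self)

lemma rep_props:
  assumes X: "zclosed X" and a: "a \<in> ratfuns X"
  shows "rep a \<in> ratfun_pairs X" "a = ratcls X (rep a)"
proof -
  obtain p where p: "p \<in> ratfun_pairs X" "a = ratcls X p" using a unfolding ratfuns_def by blast
  have "rep a \<in> ratcls X p" using rep_mem[OF a] p by simp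
  hence r: "rep a \<in> ratfun_pairs X" "rel X p (rep a)" using ratcls_mem by blast+
  show "rep a \<in> ratfun_pairs X" by (rule r(1))
  show "a = ratcls X (rep a)" using ratcls_eq[OF X p(1) r(1) r(2)] p(2) by simp
qed

lemma ratfunsI: "p \<in> ratfun_pairs X \<Longrightarrow> ratcls X p \<in> ratfuns X"
  unfolding ratfuns_def by blast

lemma rat_add_ratfuns: "zclosed X \<Longrightarrow> a \<in> ratfuns X \<Longrightarrow> b \<in> ratfuns X \<Longrightarrow> rat_add X a b \<in> ratfuns X"
  unfolding rat_add_def by (rule ratfunsI, rule pairs_add) (auto intro: rep_props)

lemma rat_mult_ratfuns: "zclosed X \<Longrightarrow> a \<in> ratfuns X \<Longrightarrow> b \<in> ratfuns X \<Longrightarrow> rat_mult X a b \<in> ratfuns X"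
  unfolding rat_mult_def by (rule ratfunsI, rule pairs_mult) (auto intro: rep_props)

lemma rat_smult_ratfuns: "zclosed X \<Longrightarrow> a \<in> ratfuns X \<Longrightarrow> rat_smult X c a \<in> ratfuns X"
  unfolding rat_smult_def by (rule ratfunsI, rule pairs_smult[where p="rep a", simplified]) (auto intro: rep_props)

lemma pc_ratfuns: "f \<in> polyfun \<Longrightarrow> pc X f \<in> ratfuns X"
  unfolding pc_def by (rule ratfunsI, rule one_pair)

lemma rep_pc:
  assumes f: "f \<in> polyfun"
  shows "rep (pc X f) \<in> ratfun_pairs X" "\<forall>x\<in>X. fst (rep (pc X f)) x = f x * snd (rep (pc X f)) x"
proof -
  have "rep (pc X f) \<in> ratcls X (f, \<lambda>_. 1)" using rep_mem[OF pc_ratfuns[OF f]] unfolding pc_def .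
  from ratcls_mem[OF this] show "rep (pc X f) \<in> ratfun_pairs X"
    "\<forall>x\<in>X. fst (rep (pc X f)) x = f x * snd (rep (pc X f)) x"
    unfolding rel_def by auto
qed

lemma pc_add:
  assumes X: "zclosed X" and f: "f \<in> polyfun" and g: "g \<in> polyfun"
  shows "rat_add X (pc X f) (pc X g) = pc X (\<lambda>x. f x + g x)"
proof -
  let ?a = "rep (pc X f)" and ?b = "rep (pc X g)"
  have A: "?a \<in> ratfun_pairs X" "\<forall>x\<in>X. fst ?a x = f x * snd ?a x" using rep_pc[OF f] by blast+
  have B: "?b \<in> ratfun_pairs X" "\<forall>x\<in>X. fst ?b x = g x * snd ?b x" using rep_pc[OF g] by blast+
  have "ratcls X (\<lambda>x. fst ?a x * snd ?b x + fst ?b x * snd ?a x, \<lambda>x. snd ?a x * snd ?b x)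
      = ratcls X (\<lambda>x. f x + g x, \<lambda>_. 1)"
    apply (rule ratcls_eq[OF X pairs_add[OF A(1) B(1)] one_pair[OF polyfun_add[OF f g]]])
    using A(2) B(2) unfolding rel_def by (auto simp: algebra_simps)
  thus ?thesis unfolding rat_add_def pc_def .
qed

lemma pc_mult:
  assumes X: "zclosed X" and f: "f \<in> polyfun" and g: "g \<in> polyfun"
  shows "rat_mult X (pc X f) (pc X g) = pc X (\<lambda>x. f x * g x)"
proof -
  let ?a = "rep (pc X f)" and ?b = "rep (pc X g)"
  have A: "?a \<in> ratfun_pairs X" "\<forall>x\<in>X. fst ?a x = f x * snd ?a x" using rep_pc[OF f] by blast+
  have B: "?b \<in> ratfun_pairs X" "\<forall>x\<in>X. fst ?b x = g x * snd ?b x" using rep_pc[OF g] by blast+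
  have "ratcls X (\<lambda>x. fst ?a x * fst ?b x, \<lambda>x. snd ?a x * snd ?b x)
      = ratcls X (\<lambda>x. f x * g x, \<lambda>_. 1)"
    apply (rule ratcls_eq[OF X pairs_mult[OF A(1) B(1)] one_pair[OF polyfun_mult[OF f g]]])
    using A(2) B(2) unfolding rel_def by (auto simp: algebra_simps)
  thus ?thesis unfolding rat_mult_def pc_def .
qed

lemma pc_smult:
  assumes X: "zclosed X" and f: "f \<in> polyfun"
  shows "rat_smult X c (pc X f) = pc X (\<lambda>x. c * f x)"
proof -
  let ?a = "rep (pc X f)"
  have A: "?a \<in> ratfun_pairs X" "\<forall>x\<in>X. fst ?a x = f x * snd ?a x" using rep_pc[OF f] by blast+
  have "ratcls X (\<lambda>x. c * fst ?a x, snd ?a) = ratcls X (\<lambda>x. c * f x, \<lambda>_. 1)"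
    apply (rule ratcls_eq[OF X pairs_smult[OF A(1), simplified] one_pair[OF polyfun_smult[OF f]]])
    using A(2) unfolding rel_def by (auto simp: algebra_simps)
  thus ?thesis unfolding rat_smult_def pc_def .
qed

lemma smult_as_mult:
  assumes X: "zclosed X" and a: "a \<in> ratfuns X"
  shows "rat_smult X c a = rat_mult X (pc X (\<lambda>_. c)) a"
proof -
  let ?a = "rep a" and ?b = "rep (pc X (\<lambda>_. c))"
  have A: "?a \<in> ratfun_pairs X" using rep_props[OF X a] by blast
  have B: "?b \<in> ratfun_pairs X" "\<forall>x\<in>X. fst ?b x = c * snd ?b x" using rep_pc[OF polyfun_const] by blast+
  have "ratcls X (\<lambda>x. c * fst ?a x, snd ?a) = ratcls X (\<lambda>x. fst ?b x * fst ?a x, \<lambda>x. snd ?b x * snd ?a x)"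
    apply (rule ratcls_eq[OF X pairs_smult[OF A, simplified] pairs_mult[OF B(1) A]])
    using B(2) unfolding rel_def by (auto simp: algebra_simps)
  thus ?thesis unfolding rat_smult_def rat_mult_def .
qed

lemma pc_loc: "f \<in> polyfun \<Longrightarrow> pc X f \<in> loc_ring X"
proof -
  assume f: "f \<in> polyfun"
  have mem: "(f, \<lambda>_. 1) \<in> ratcls X (f, \<lambda>_. 1)" by (rule ratcls_self[OF one_pair[OF f]])
  show ?thesis unfolding loc_ring_def mem_Collect_eq
    apply (rule conjI[OF pc_ratfuns[OF f]])
    unfolding pc_def by (rule bexI[OF _ mem]) simp
qed

lemma pc_coord_max: "pc X (\<lambda>x::'k::field^'n::finite. x $ i) \<in> max_ideal X"
proof -
  have f: "(\<lambda>x::'k::field^'n::finite. x $ i) \<in> polyfun" by (rule polyfun_coord)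
  have mem: "((\<lambda>x::'k::field^'n::finite. x $ i), \<lambda>_. 1) \<in> ratcls X ((\<lambda>x. x $ i), \<lambda>_. 1)"
    by (rule ratcls_self[OF one_pair[OF f]])
  show ?thesis unfolding max_ideal_def mem_Collect_eq
    apply (rule conjI[OF pc_ratfuns[OF f]])
    unfolding pc_def by (rule bexI[OF _ mem]) simp
qed

lemma rat_zero_pc: "rat_zero X = pc X (\<lambda>_. 0)" unfolding rat_zero_def pc_def ..
lemma rat_one_pc: "rat_one X = pc X (\<lambda>_. 1)" unfolding rat_one_def pc_def ..

lemma tdeg_zero_iff: "tdeg (\<alpha>::'n::finite \<Rightarrow> nat) = 0 \<longleftrightarrow> \<alpha> = (\<lambda>_. 0)"
  unfolding tdeg_def by (auto simp: fun_eq_iff)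

lemma tdeg_pos_ex: "tdeg (\<alpha>::'n::finite \<Rightarrow> nat) \<noteq> 0 \<Longrightarrow> \<exists>i. \<alpha> i > 0"
  using tdeg_zero_iff by (metis gr0I)

lemma split_delta: "\<alpha> i > 0 \<Longrightarrow> \<alpha> = (\<lambda>k. delta i k + (\<alpha>(i := \<alpha> i - 1)) k)"
  unfolding delta_def by (auto simp: fun_eq_iff)

lemma split_tdeg: "j \<le> tdeg (\<alpha>::'n::finite \<Rightarrow> nat) \<Longrightarrow> \<exists>\<beta> \<gamma>. \<alpha> = (\<lambda>i. \<beta> i + \<gamma> i) \<and> tdeg \<beta> = j"
proof (induction j)
  case 0
  show ?case by (rule exI[of _ "\<lambda>_. 0"], rule exI[of _ \<alpha>]) (simp add: tdeg_zero)
next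
  case (Suc j)
  then obtain \<beta> \<gamma> where bg: "\<alpha> = (\<lambda>i. \<beta> i + \<gamma> i)" "tdeg \<beta> = j" by auto
  have "tdeg \<alpha> = tdeg \<beta> + tdeg \<gamma>" using bg(1) tdeg_add by metis
  hence "tdeg \<gamma> \<noteq> 0" using Suc.prems bg(2) by simp
  then obtain i where i: "\<gamma> i > 0" using tdeg_pos_ex by blast
  define \<gamma>' where "\<gamma>' = \<gamma>(i := \<gamma> i - 1)"
  define \<beta>' where "\<beta>' = (\<lambda>k. \<beta> k + delta i k)"
  have g: "\<gamma> = (\<lambda>k. delta i k + \<gamma>' k)" unfolding \<gamma>'_def by (rule split_delta[where i=i and \<alpha>=\<gamma>, OF i])
  have "\<alpha> = (\<lambda>k. \<beta>' k + \<gamma>' k)" unfolding bg(1) \<beta>'_def by (subst g) (simp add: add.assoc)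
  moreover have "tdeg \<beta>' = Suc j" unfolding \<beta>'_def tdeg_add tdeg_delta bg(2) by simp
  ultimately show ?case by blast
qed

lemma monom_fun_add_fun: "monom_fun (\<lambda>i. \<beta> i + \<gamma> i) = (\<lambda>x. monom_fun \<beta> x * monom_fun \<gamma> x)"
  by (rule ext) (rule monom_fun_add)

lemma monom_polyfun: "monom_fun \<alpha> \<in> polyfun"
  using polyfun_deg_polyfun[OF polyfun_deg_monom[OF order_refl]] .

lemma mprods_monom:
  fixes X :: "('k::field ^ 'n::finite) set"
  assumes X: "zclosed X"
  shows "tdeg \<beta> = j \<Longrightarrow> pc X (monom_fun \<beta>) \<in> mprods X j"
proof (induction j arbitrary: \<beta>)
  case 0
  hence b0: "\<beta> = (\<lambda>_. 0)" using tdeg_zero_iff by blast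
  have "monom_fun \<beta> = (\<lambda>_::'k^'n. 1::'k)" unfolding b0 by (rule ext) (rule monom_fun_zero)
  thus ?case by (simp add: rat_one_pc)
next
  case (Suc j)
  then obtain i where i: "\<beta> i > 0" using tdeg_pos_ex by (metis nat.distinct(1))
  define \<beta>' where "\<beta>' = \<beta>(i := \<beta> i - 1)"
  have b: "\<beta> = (\<lambda>k. delta i k + \<beta>' k)" unfolding \<beta>'_def by (rule split_delta[where i=i and \<alpha>=\<beta>, OF i])
  have "tdeg \<beta> = 1 + tdeg \<beta>'" by (subst b) (simp add: tdeg_add tdeg_delta)
  hence tj: "tdeg \<beta>' = j" using Suc.prems by simp
  have "monom_fun \<beta> = (\<lambda>x::'k^'n. x $ i * monom_fun \<beta>' x)"
    by (subst b) (simp add: monom_fun_add_fun monom_fun_delta)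
  hence "pc X (monom_fun \<beta>) = rat_mult X (pc X (\<lambda>x. x $ i)) (pc X (monom_fun \<beta>'))"
    using pc_mult[OF X polyfun_coord monom_polyfun] by simp
  moreover have "pc X (monom_fun \<beta>') \<in> mprods X j" using Suc.IH[OF tj] .
  ultimately show ?case using pc_coord_max[of X i] by auto
qed

lemma monom_in_mpow:
  fixes X :: "('k::field ^ 'n::finite) set"
  assumes X: "zclosed X" and r: "r \<le> tdeg \<alpha>"
  shows "pc X (monom_fun \<alpha>) \<in> max_ideal_pow X r"
proof -
  obtain \<beta> \<gamma> where bg: "\<alpha> = (\<lambda>i. \<beta> i + \<gamma> i)" "tdeg \<beta> = r" using split_tdeg[OF r] by blast
  have "monom_fun \<alpha> = (\<lambda>x::'k^'n. monom_fun \<gamma> x * monom_fun \<beta> x)"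
    unfolding bg(1) monom_fun_add_fun by (simp add: mult.commute)
  hence "pc X (monom_fun \<alpha>) = rat_mult X (pc X (monom_fun \<gamma>)) (pc X (monom_fun \<beta>))"
    using pc_mult[OF X monom_polyfun monom_polyfun] by simp
  also have "\<dots> \<in> ideal_gen X (mprods X r)"
    by (rule ideal_gen.mult[OF pc_loc[OF monom_polyfun] ideal_gen.base[OF mprods_monom[OF X bg(2)]]])
  finally show ?thesis unfolding max_ideal_pow_def .
qed

lemma sum_closed:
  fixes X :: "('k::field ^ 'n::finite) set"
  assumes Q0: "pc X (\<lambda>_. 0) \<in> Q"
    and Qadd: "\<And>f g. f \<in> polyfun \<Longrightarrow> g \<in> polyfun \<Longrightarrow> pc X f \<in> Q \<Longrightarrow> pc X g \<in> Q \<Longrightarrow> pc X (\<lambda>x. f x + g x) \<in> Q"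
    and Qsm: "\<And>f c. f \<in> polyfun \<Longrightarrow> pc X f \<in> Q \<Longrightarrow> pc X (\<lambda>x. c * f x) \<in> Q"
    and T: "finite T" and F: "\<And>t. t \<in> T \<Longrightarrow> F t \<in> polyfun \<and> pc X (F t) \<in> Q"
  shows "pc X (\<lambda>x. \<Sum>t\<in>T. c t * F t x) \<in> Q \<and> (\<lambda>x. \<Sum>t\<in>T. c t * F t x) \<in> polyfun"
  using T F
proof (induction T rule: finite_induct)
  case empty
  thus ?case using Q0 polyfun_const by simp
next
  case (insert a T)
  have IH: "pc X (\<lambda>x. \<Sum>t\<in>T. c t * F t x) \<in> Q" "(\<lambda>x. \<Sum>t\<in>T. c t * F t x) \<in> polyfun"
    using insert by auto
  have Fa: "F a \<in> polyfun" "pc X (F a) \<in> Q" using insert.prems by auto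
  have e: "(\<lambda>x. \<Sum>t\<in>insert a T. c t * F t x) = (\<lambda>x. c a * F a x + (\<Sum>t\<in>T. c t * F t x))"
    using insert.hyps by simp
  show ?case unfolding e
    using Qadd[OF polyfun_smult[OF Fa(1)] IH(2) Qsm[OF Fa] IH(1)] polyfun_add[OF polyfun_smult[OF Fa(1)] IH(2)]
    by simp
qed

lemma A_deg_iff: "a \<in> A_deg X m \<longleftrightarrow> (\<exists>p. p \<in> polyfun_deg m \<and> a = pc X p)"
  unfolding A_deg_def pc_def by blast

lemma rspan_mono_sub:
  assumes "S \<subseteq> rspan X T" shows "rspan X S \<subseteq> rspan X T"
proof
  fix a assume "a \<in> rspan X S"
  thus "a \<in> rspan X T"
    by (induction rule: rspan.induct) (use assms in \<open>auto intro: rspan.intros\<close>)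
qed

lemma ideal_pc_add:
  assumes X: "zclosed X" and I: "is_ideal X I" and f: "f \<in> polyfun" and g: "g \<in> polyfun"
    and "pc X f \<in> I" "pc X g \<in> I"
  shows "pc X (\<lambda>x. f x + g x) \<in> I"
proof -
  have "rat_add X (pc X f) (pc X g) \<in> I" using I assms(5,6) unfolding is_ideal_def by blast
  thus ?thesis using pc_add[OF X f g] by simp
qed

lemma ideal_pc_smult:
  assumes X: "zclosed X" and I: "is_ideal X I" and f: "f \<in> polyfun" and "pc X f \<in> I"
  shows "pc X (\<lambda>x. c * f x) \<in> I"
proof -
  have "rat_mult X (pc X (\<lambda>_. c)) (pc X f) \<in> I"
    using I assms(4) pc_loc[OF polyfun_const] unfolding is_ideal_def by blast
  thus ?thesis using pc_mult[OF X polyfun_const f] by simp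
qed

lemma ideal_pc_zero: "is_ideal X I \<Longrightarrow> pc X (\<lambda>_. 0) \<in> I"
  unfolding is_ideal_def rat_zero_pc by blast

lemma rspan_pc_closed:
  assumes X: "zclosed X"
  shows "pc X (\<lambda>_. 0) \<in> rspan X P"
    and "\<And>f g. f \<in> polyfun \<Longrightarrow> g \<in> polyfun \<Longrightarrow> pc X f \<in> rspan X P \<Longrightarrow> pc X g \<in> rspan X P \<Longrightarrow> pc X (\<lambda>x. f x + g x) \<in> rspan X P"
    and "\<And>f c. f \<in> polyfun \<Longrightarrow> pc X f \<in> rspan X P \<Longrightarrow> pc X (\<lambda>x. c * f x) \<in> rspan X P"
proof -
  show "pc X (\<lambda>_. 0) \<in> rspan X P" using rspan.zero rat_zero_pc by metis
  show "pc X (\<lambda>x. f x + g x) \<in> rspan X P" if "f \<in> polyfun" "g \<in> polyfun" "pc X f \<in> rspan X P" "pc X g \<in> rspan X P" for f g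
    using rspan.add[OF that(3,4)] pc_add[OF X that(1,2)] by simp
  show "pc X (\<lambda>x. c * f x) \<in> rspan X P" if "f \<in> polyfun" "pc X f \<in> rspan X P" for f c
    using rspan.smult[OF that(2), of c] pc_smult[OF X that(1)] by simp
qed

lemma main_eq:
  fixes X :: "('k::field ^ 'n::finite) set"
  assumes X: "zclosed X" and I: "is_ideal X I" and mp: "max_ideal_pow X r \<subseteq> I" and rm: "r \<le> m"
  shows "sprod X (I_deg X I m) (A_deg X k) = rspan X (I_deg X I (m+k))"
proof -
  define P where "P = {rat_mult X a b | a b. a \<in> I_deg X I m \<and> b \<in> A_deg X k}"
  have sp: "sprod X (I_deg X I m) (A_deg X k) = rspan X P" unfolding sprod_def P_def ..
  have sub1: "P \<subseteq> rspan X (I_deg X I (m+k))"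
  proof
    fix z assume "z \<in> P"
    then obtain a b where ab: "z = rat_mult X a b" "a \<in> I_deg X I m" "b \<in> A_deg X k"
      unfolding P_def by blast
    obtain p where p: "p \<in> polyfun_deg m" "a = pc X p" using ab(2) unfolding I_deg_def Int_iff A_deg_iff by blast
    obtain q where q: "q \<in> polyfun_deg k" "b = pc X q" using ab(3) unfolding A_deg_iff by blast
    have pp: "p \<in> polyfun" "q \<in> polyfun" using p q polyfun_deg_polyfun by blast+
    have z: "z = pc X (\<lambda>x. p x * q x)" using ab(1) p(2) q(2) pc_mult[OF X pp] by simp
    have "z \<in> A_deg X (m+k)" unfolding z A_deg_iff using polyfun_deg_mult[OF p(1) q(1)] by blast
    moreover have "rat_mult X b a \<in> I"
      using I ab(2) pc_loc[OF pp(2)] q(2) unfolding is_ideal_def I_deg_def by blast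
    hence "pc X (\<lambda>x. q x * p x) \<in> I" using p(2) q(2) pc_mult[OF X pp(2) pp(1)] by simp
    hence "z \<in> I" unfolding z by (simp add: mult.commute)
    ultimately have "z \<in> I_deg X I (m+k)" unfolding I_deg_def by blast
    thus "z \<in> rspan X (I_deg X I (m+k))" by (rule rspan.base)
  qed
  have sub2: "I_deg X I (m+k) \<subseteq> rspan X P"
  proof
    fix a assume a: "a \<in> I_deg X I (m+k)"
    obtain p where p: "p \<in> polyfun_deg (m+k)" "a = pc X p" using a unfolding I_deg_def Int_iff A_deg_iff by blast
    have aI: "a \<in> I" using a unfolding I_deg_def by blast
    obtain c where pc_: "p = (\<lambda>x. \<Sum>\<alpha>\<in>{\<alpha>. tdeg \<alpha> \<le> m+k}. c \<alpha> * monom_fun \<alpha> x)"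
      using polyfun_deg_obtain[OF p(1)] by blast
    define T :: "('n \<Rightarrow> nat) set" where "T = {\<alpha>. tdeg \<alpha> \<le> m+k}"
    define T1 where "T1 = {\<alpha>\<in>T. tdeg \<alpha> < r}"
    define T2 where "T2 = {\<alpha>\<in>T. \<not> tdeg \<alpha> < r}"
    define q where "q = (\<lambda>x::'k^'n. \<Sum>\<alpha>\<in>T1. c \<alpha> * monom_fun \<alpha> x)"
    define h where "h = (\<lambda>x::'k^'n. \<Sum>\<alpha>\<in>T2. c \<alpha> * monom_fun \<alpha> x)"
    have finT: "finite T" unfolding T_def by (rule finite_tdeg)
    have fin1: "finite T1" "finite T2" unfolding T1_def T2_def using finT by auto
    have hp: "p = (\<lambda>x. q x + h x)"
    proof
      fix x
      have "T = T1 \<union> T2" "T1 \<inter> T2 = {}" unfolding T1_def T2_def by auto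
      hence "(\<Sum>\<alpha>\<in>T. c \<alpha> * monom_fun \<alpha> x) = (\<Sum>\<alpha>\<in>T1. c \<alpha> * monom_fun \<alpha> x) + (\<Sum>\<alpha>\<in>T2. c \<alpha> * monom_fun \<alpha> x)"
        using sum.union_disjoint[OF fin1] by simp
      thus "p x = q x + h x" unfolding pc_ q_def h_def T_def by simp
    qed
    have hI: "pc X h \<in> I \<and> h \<in> polyfun"
      unfolding h_def
    proof (rule sum_closed[OF ideal_pc_zero[OF I] ideal_pc_add[OF X I] ideal_pc_smult[OF X I] fin1(2)])
      fix t assume "t \<in> T2"
      hence "r \<le> tdeg t" unfolding T2_def by simp
      thus "monom_fun t \<in> polyfun \<and> pc X (monom_fun t) \<in> I"
        using monom_polyfun monom_in_mpow[OF X] mp by blast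
    qed
    have qdeg: "q \<in> polyfun_deg m"
    proof -
      have "(\<lambda>x::'k^'n. \<Sum>s\<in>T1. c s * monom_fun ((\<lambda>\<alpha>. \<alpha>) s) x) \<in> polyfun_deg m"
        by (rule polyfun_deg_gen[OF fin1(1)]) (use rm in \<open>auto simp: T1_def\<close>)
      thus ?thesis unfolding q_def by simp
    qed
    have pp: "p \<in> polyfun" using p(1) polyfun_deg_polyfun by blast
    have "pc X (\<lambda>x. p x + (-1) * h x) \<in> I"
    proof (rule ideal_pc_add[OF X I pp polyfun_smult])
      show "h \<in> polyfun" using hI by blast
      show "pc X p \<in> I" using aI p(2) by simp
      show "pc X (\<lambda>x. (-1) * h x) \<in> I" using hI ideal_pc_smult[OF X I, of h "-1"] by blast
    qed
    moreover have "(\<lambda>x. p x + (-1) * h x) = q" unfolding hp by auto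
    ultimately have qI: "pc X q \<in> I" by simp
    have qP: "pc X q \<in> rspan X P"
    proof (rule rspan.base)
      have q1: "pc X q = rat_mult X (pc X q) (pc X (\<lambda>_. 1))"
        using pc_mult[OF X polyfun_deg_polyfun[OF qdeg] polyfun_const, of 1] by simp
      have "pc X q \<in> I_deg X I m" unfolding I_deg_def Int_iff A_deg_iff using qdeg qI by blast
      moreover have "pc X (\<lambda>_. 1) \<in> A_deg X k" unfolding A_deg_iff using polyfun_deg_const by blast
      ultimately show "pc X q \<in> P" unfolding P_def using q1 by blast
    qed
    have hP: "pc X h \<in> rspan X P"
      unfolding h_def
    proof (rule sum_closed[OF rspan_pc_closed[OF X] fin1(2), THEN conjunct1])
      fix t assume "t \<in> T2"
      hence t: "r \<le> tdeg t" "tdeg t \<le> m + k" unfolding T2_def T_def by auto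
      obtain \<beta> \<gamma> where bg: "t = (\<lambda>i. \<beta> i + \<gamma> i)" "tdeg \<beta> = min m (tdeg t)"
        using split_tdeg[of "min m (tdeg t)" t] by auto
      have tt: "tdeg t = tdeg \<beta> + tdeg \<gamma>" using bg(1) tdeg_add by metis
      have b1: "pc X (monom_fun \<beta>) \<in> I" using monom_in_mpow[OF X, of r \<beta>] mp bg(2) t rm by auto
      have b2: "pc X (monom_fun \<beta>) \<in> A_deg X m" unfolding A_deg_iff
        using polyfun_deg_monom[of \<beta> m] bg(2) by auto
      have "tdeg \<gamma> \<le> k" using bg(2) tt t by (simp add: min_def split: if_splits)
      hence g2: "pc X (monom_fun \<gamma>) \<in> A_deg X k" unfolding A_deg_iff
        using polyfun_deg_monom[of \<gamma> k] by auto
      have "pc X (monom_fun t) = rat_mult X (pc X (monom_fun \<beta>)) (pc X (monom_fun \<gamma>))"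
        unfolding bg(1) monom_fun_add_fun using pc_mult[OF X monom_polyfun monom_polyfun] by simp
      hence "pc X (monom_fun t) \<in> P" unfolding P_def I_deg_def using b1 b2 g2 by blast
      thus "monom_fun t \<in> polyfun \<and> pc X (monom_fun t) \<in> rspan X P"
        using monom_polyfun rspan.base by blast
    qed
    have "a = rat_add X (pc X q) (pc X h)"
      unfolding p(2) hp using pc_add[OF X polyfun_deg_polyfun[OF qdeg]] hI by simp
    thus "a \<in> rspan X P" using rspan.add[OF qP hP] by simp
  qed
  show ?thesis unfolding sp
    using rspan_mono_sub[OF sub1] rspan_mono_sub[OF sub2] by blast
qed

lemma KX_nonempty:
  fixes X :: "('k::field ^ 'n::finite) set"
  assumes X: "zclosed X"
  shows "rspan X {rat_one X} \<in> KX X"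
proof -
  let ?N = "rspan X {rat_one X}"
  have one: "rat_one X \<in> ratfuns X" unfolding rat_one_pc by (rule pc_ratfuns[OF polyfun_const])
  have "a \<in> ratfuns X" if "a \<in> ?N" for a
    using that
  proof (induction rule: rspan.induct)
    case zero thus ?case unfolding rat_zero_pc by (rule pc_ratfuns[OF polyfun_const])
  next
    case (base s) thus ?case using one by simp
  next
    case (add a b) thus ?case using rat_add_ratfuns[OF X] by blast
  next
    case (smult a c) thus ?case using rat_smult_ratfuns[OF X] by blast
  qed
  hence sub: "?N \<subseteq> ratfuns X" by blast
  have idem: "rspan X ?N = ?N"
    using rspan_mono_sub[of ?N X "{rat_one X}"] rspan.base[of _ ?N X] by blast
  have fin: "\<exists>F. finite F \<and> F \<subseteq> ?N \<and> rspan X F = ?N"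
    by (rule exI[of _ "{rat_one X}"]) (auto intro: rspan.base)
  have nz: "\<exists>a\<in>?N. nonzero_on Y a" if Y: "Y \<in> irr_components X" for Y
  proof -
    have mem: "(\<lambda>_. 1, \<lambda>_. 1) \<in> rat_one X"
      unfolding rat_one_def by (rule ratcls_self[OF one_pair[OF polyfun_const]])
    obtain y where "y \<in> Y" using comp_ne[OF Y] by blast
    hence "nonzero_on Y (rat_one X)" unfolding nonzero_on_def
      by - (rule bexI[OF _ mem], auto)
    thus ?thesis using rspan.base[of "rat_one X" "{rat_one X}" X] by blast
  qed
  show ?thesis unfolding KX_def using sub idem fin nz by blast
qed

theorem corollary2p5:
  fixes X :: "('k::alg_closed_field ^ 'N::finite) set"
    and n :: nat
    and I :: "('k,'N) ratfun set"
    and r :: nat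
  assumes "affine_variety X"
    and "\<forall>Y\<in>irr_components X. has_dim Y n"
    and "0 \<in> X"
    and "\<forall>Y\<in>irr_components X. 0 \<in> Y"
    and "is_primary_for X (max_ideal X) I"
    and "r > 0"
    and "max_ideal_pow X r \<subseteq> I"
  shows "\<forall>k m. k \<ge> r \<and> m \<ge> r \<longrightarrow>
           G_eq X (I_deg X I m) (A_deg X m) (I_deg X I k) (A_deg X k)"
proof (intro allI impI)
  fix k m assume km: "k \<ge> r \<and> m \<ge> r"
  have X: "zclosed X" using assms(1) unfolding affine_variety_def by blast
  have I: "is_ideal X I" using assms(5) unfolding is_primary_for_def by blast
  have e1: "sprod X (I_deg X I m) (A_deg X k) = rspan X (I_deg X I (m+k))"
    by (rule main_eq[OF X I assms(7)]) (use km in simp)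
  have e2: "sprod X (I_deg X I k) (A_deg X m) = rspan X (I_deg X I (k+m))"
    by (rule main_eq[OF X I assms(7)]) (use km in simp)
  show "G_eq X (I_deg X I m) (A_deg X m) (I_deg X I k) (A_deg X k)"
    unfolding G_eq_def e1 e2 using KX_nonempty[OF X] by (simp add: add.commute) blast
qed

end
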